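(* For real numbers $t_1,t_2,t_3$, let $$\rho^{(1)}_{AB}=\tfrac19\,\mathbb{1}_3\otimes\mathbb{1}_3+\tfrac14\big(t_1\,\lambda_1\otimes\lambda_1+t_2\,\lambda_2\otimes\lambda_2+t_3\,\lambda_3\otimes\lambda_3\big),$$ and assume $\rho^{(1)}_{AB}$ is positive semidefinite (a quantum state). Then $\rho^{(1)}_{AB}$ is separable if and only if $|t_1|+|t_2|+|t_3|\le\frac49$. Moreover, when $|t_1|+|t_2|+|t_3|\le\frac49$, a separable decomposition is obtained as follows. Choose real $\alpha_\mu,\beta_\mu$ with $\alpha_\mu\beta_\mu=t_\mu$ and $\sum_\mu\alpha_\mu^2\le\frac49$, $\sum_\mu\beta_\mu^2\le\frac49$. With the sign patterns $$\vec\epsilon^{(1)}=(1,-1,-1),\quad\vec\epsilon^{(2)}=(-1,-1,1),\quad\vec\epsilon^{(3)}=(-1,1,-1),\quad\vec\epsilon^{(4)}=(1,1,1),$$ one has $$\rho^{(1)}_{AB}=\sum_{i=1}^4\tfrac14\Big(\tfrac13\mathbb{1}+\tfrac12\sum_{\mu=1}^3\epsilon^{(i)}_\mu\alpha_\mu\lambda_\mu\Big)\otimes\Big(\tfrac13\mathbb{1}+\tfrac12\sum_{\mu=1}^3\epsilon^{(i)}_\mu\beta_\mu\lambda_\mu\Big),$$ where each factor is a density matrix.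
   Context: With $\{|1\rangle,|2\rangle,|3\rangle\}$ the standard basis of $\mathbb{C}^3$, the Gell-Mann matrices used here are: - $\lambda_1=|1\rangle\langle2|+|2\rangle\langle1|$, - $\lambda_2=-i|1\rangle\langle2|+i|2\rangle\langle1|$, - $\lambda_3=|1\rangle\langle1|-|2\rangle\langle2|$. A state is separable if it is a convex combination of tensor products of density matrices. *)

theory Defs
  imports "HOL-Analysis.Analysis" "HOL-Library.Numeral_Type"
begin

(* Matrices over C^3 are complex^3^3; the standard basis |1>,|2>,|3> corresponds
   to the indices 0,1,2 of the numeral type 3.  Operators on C^3 (x) C^3 are
   complex^(3*3)^(3*3), the pair (i,j) indexing |i>|j>. *)

type_synonym cmat3 = "complex^3^3"
type_synonym cmat9 = "complex^(3 \<times> 3)^(3 \<times> 3)"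

definition kron :: "complex^'a^'a \<Rightarrow> complex^'b^'b \<Rightarrow> complex^('a \<times> 'b)^('a \<times> 'b)" where
  "kron A B = (\<chi> p q. A $ fst p $ fst q * B $ snd p $ snd q)"

definition mtrace :: "complex^'n^'n \<Rightarrow> complex" where
  "mtrace A = (\<Sum>i\<in>UNIV. A $ i $ i)"

definition hermitian_mat :: "complex^'n^'n \<Rightarrow> bool" where
  "hermitian_mat A \<longleftrightarrow> (\<forall>i j. A $ i $ j = cnj (A $ j $ i))"

definition psd :: "complex^'n^'n \<Rightarrow> bool" where
  "psd A \<longleftrightarrow> hermitian_mat A \<and>
     (\<forall>x :: complex^'n. 0 \<le> Re (\<Sum>i\<in>UNIV. \<Sum>j\<in>UNIV. cnj (x $ i) * A $ i $ j * x $ j))"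

definition density_mat :: "complex^'n^'n \<Rightarrow> bool" where
  "density_mat A \<longleftrightarrow> psd A \<and> mtrace A = 1"

definition separable :: "complex^('a::finite \<times> 'b::finite)^('a \<times> 'b) \<Rightarrow> bool" where
  "separable R \<longleftrightarrow> (\<exists>(n::nat) (p::nat \<Rightarrow> real) (A::nat \<Rightarrow> complex^'a^'a) (B::nat \<Rightarrow> complex^'b^'b).
      (\<forall>k<n. 0 \<le> p k \<and> density_mat (A k) \<and> density_mat (B k)) \<and>
      (\<Sum>k<n. p k) = 1 \<and>
      R = (\<Sum>k<n. p k *\<^sub>R kron (A k) (B k)))"

definition gm :: "nat \<Rightarrow> cmat3" where
  "gm mu = (\<chi> i j.
     if mu = 1 then (if (i = 0 \<and> j = 1) \<or> (i = 1 \<and> j = 0) then 1 else 0)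
     else if mu = 2 then (if i = 0 \<and> j = 1 then - \<i> else if i = 1 \<and> j = 0 then \<i> else 0)
     else if mu = 3 then (if i = j \<and> i = 0 then 1 else if i = j \<and> i = 1 then -1 else 0)
     else 0)"

definition rho1 :: "(nat \<Rightarrow> real) \<Rightarrow> cmat9" where
  "rho1 t = (1/9) *\<^sub>R kron (mat 1) (mat 1)
            + (1/4) *\<^sub>R (\<Sum>mu\<in>{1,2,3}. t mu *\<^sub>R kron (gm mu) (gm mu))"

definition eps :: "nat \<Rightarrow> nat \<Rightarrow> real" where
  "eps i mu = (if i = 1 then (if mu = 1 then 1 else -1)
               else if i = 2 then (if mu = 3 then 1 else -1)
               else if i = 3 then (if mu = 2 then 1 else -1)
               else 1)"

definition bloch :: "(nat \<Rightarrow> real) \<Rightarrow> cmat3" where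
  "bloch c = (1/3) *\<^sub>R mat 1 + (1/2) *\<^sub>R (\<Sum>mu\<in>{1,2,3}. c mu *\<^sub>R gm mu)"

end

theory Submission
  imports Defs
begin
lemma U3: "(UNIV::3 set) = {0,1,2}" 
proof -
  have "(3::3) = 0" by simp
  then show ?thesis using UNIV_3 by auto
qed
lemma ex3: "\<And>i::3. i = 0 \<or> i = 1 \<or> i = 2" using U3 by blast
lemma all3: "(\<forall>i::3. P i) \<longleftrightarrow> P 0 \<and> P 1 \<and> P 2"
  using ex3 by metis
lemma card3: "card {0,1,2::3} = 3" proof - have "card (UNIV::3 set) = 3" by simp then show ?thesis using U3 by simp qed
lemma dist3: "(0::3) \<noteq> 1 \<and> (0::3) \<noteq> 2 \<and> (1::3) \<noteq> 2"
proof -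
  have c: "card {0,1,2::3} = 3" by (rule card3)
  show ?thesis
  proof (intro conjI notI)
    assume "(0::3) = 1" then have "card {0,1,2::3} \<le> 2" by (simp add: card_insert_le_m1)
    then show False using c by simp
  next
    assume "(0::3) = 2" then have "card {0,1,2::3} \<le> 2" by (simp add: card_insert_le_m1)
    then show False using c by simp
  next
    assume "(1::3) = 2" then have "card {0,1,2::3} \<le> 2" by (simp add: card_insert_le_m1)
    then show False using c by simp
  qed
qed
lemma ne3[simp]: "(0::3) \<noteq> 1" "(1::3) \<noteq> 0" "(0::3) \<noteq> 2" "(2::3) \<noteq> 0" "(1::3) \<noteq> 2" "(2::3) \<noteq> 1"
  using dist3 by metis+
lemma sum3: "(\<Sum>i\<in>UNIV. f (i::3)) = f 0 + f 1 + f 2"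
proof -
  have "(\<Sum>i\<in>{0,1,2}. f (i::3)) = f 0 + (\<Sum>i\<in>{1,2}. f i)"
    by (rule sum.insert) auto
  also have "(\<Sum>i\<in>{1,2}. f (i::3)) = f 1 + f 2"
    by (rule trans[OF sum.insert]) auto
  finally show ?thesis unfolding U3 by (simp add: add.assoc)
qed
lemma gm_e:
  "gm mu $ 0 $ 0 = (if mu = 3 then 1 else 0)"
  "gm mu $ 1 $ 1 = (if mu = 3 then -1 else 0)"
  "gm mu $ 2 $ 2 = 0"
  "gm mu $ 0 $ 1 = (if mu = 1 then 1 else if mu = 2 then -\<i> else 0)"
  "gm mu $ 1 $ 0 = (if mu = 1 then 1 else if mu = 2 then \<i> else 0)"
  "gm mu $ 0 $ 2 = 0" "gm mu $ 2 $ 0 = 0" "gm mu $ 1 $ 2 = 0" "gm mu $ 2 $ 1 = 0"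
  unfolding gm_def by simp_all
lemma mat_e: "(mat k :: 'a::zero^'n^'n) $ i $ j = (if i = j then k else 0)"
  by (simp add: mat_def)
lemma sc_e: "(x *\<^sub>R (M::complex^'n^'m)) $ i $ j = complex_of_real x * M $ i $ j"
  by (simp only: vector_scaleR_component) (simp add: scaleR_conv_of_real)
lemma bloch_e:
  "bloch c $ 0 $ 0 = 1/3 + of_real (c 3)/2"
  "bloch c $ 1 $ 1 = 1/3 - of_real (c 3)/2"
  "bloch c $ 2 $ 2 = 1/3"
  "bloch c $ 0 $ 1 = (of_real (c 1) - \<i> * of_real (c 2))/2"
  "bloch c $ 1 $ 0 = (of_real (c 1) + \<i> * of_real (c 2))/2"
  "bloch c $ 0 $ 2 = 0" "bloch c $ 2 $ 0 = 0" "bloch c $ 1 $ 2 = 0" "bloch c $ 2 $ 1 = 0"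
  unfolding bloch_def by (simp_all add: sc_e mat_e gm_e field_simps del: vector_scaleR_component)
lemma key_ineq:
  fixes a b p q c1 c2 c3 :: real
  assumes "c1^2+c2^2+c3^2 \<le> 4/9"
  shows "0 \<le> (a^2+b^2+p^2+q^2)/3 + c3*(a^2+b^2-p^2-q^2)/2 + c1*(a*p+b*q) + c2*(a*q-b*p)"
proof -
  define s where "s = a^2+b^2+p^2+q^2"
  define w1 where "w1 = a^2+b^2-p^2-q^2"
  define w2 where "w2 = 2*(a*p+b*q)"
  define w3 where "w3 = 2*(a*q-b*p)"
  define dd where "dd = c3*w1 + c1*w2 + c2*w3"
  have s0: "0 \<le> s" unfolding s_def by simp
  have ww: "w1^2+w2^2+w3^2 = s^2" unfolding s_def w1_def w2_def w3_def by algebra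
  have cs: "(c1^2+c2^2+c3^2)*(w1^2+w2^2+w3^2) -dd^2 = (c3*w2-c1*w1)^2 + (c3*w3-c2*w1)^2 + (c1*w3-c2*w2)^2"
    unfolding dd_def by algebra
  have "dd^2 \<le> (c1^2+c2^2+c3^2)*(w1^2+w2^2+w3^2)" using cs
    by (smt (verit) sum_power2_ge_zero zero_le_power2)
  also have "\<dots> \<le> 4/9 * s^2" unfolding ww by (rule mult_right_mono[OF assms], simp)
  finally have "dd^2 \<le> (2* s/3)^2" by (simp add: power2_eq_square)
  hence "\<bar>dd\<bar> \<le> 2* s/3" using s0 by (metis abs_le_square_iff abs_of_nonneg mult_nonneg_nonneg zero_le_divide_iff zero_le_numeral)
  hence "0 \<le> s/3 + dd/2" by linarith
  moreover have "s/3 + dd/2 = (a^2+b^2+p^2+q^2)/3 + c3*(a^2+b^2-p^2-q^2)/2 + c1*(a*p+b*q) + c2*(a*q-b*p)"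
    unfolding dd_def s_def w1_def w2_def w3_def by (simp add: field_simps)
  ultimately show ?thesis by simp
qed
lemma bloch_density:
  assumes "(\<Sum>mu\<in>{1,2,3}. (c mu)\<^sup>2) \<le> 4/9"
  shows "density_mat (bloch c)"
proof -
  have h: "hermitian_mat (bloch c)"
    unfolding hermitian_mat_def by (simp add: bloch_e all3 complex_cnj_diff)
  have tr: "mtrace (bloch c) = 1"
    unfolding mtrace_def by (simp add: bloch_e sum3)
  have "0 \<le> Re (\<Sum>i\<in>UNIV. \<Sum>j\<in>UNIV. cnj (x $ i) * bloch c $ i $ j * x $ j)" for x
  proof -
    have c: "(c 1)^2+(c 2)^2+(c 3)^2 \<le> 4/9" using assms by simp
    have k: "0 \<le> ((Re (x$0))^2+(Im (x$0))^2+(Re (x$1))^2+(Im (x$1))^2)/3 + c 3*((Re (x$0))^2+(Im (x$0))^2-(Re (x$1))^2-(Im (x$1))^2)/2 + c 1*(Re (x$0)*Re (x$1)+Im (x$0)*Im (x$1)) + c 2*(Re (x$0)*Im (x$1)-Im (x$0)*Re (x$1))"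
      by (rule key_ineq[OF c])
    have z: "0 \<le> ((Re (x$2))^2+(Im (x$2))^2)/3" by simp
    have e: "Re (\<Sum>i\<in>UNIV. \<Sum>j\<in>UNIV. cnj (x $ i) * bloch c $ i $ j * x $ j) = ((Re (x$0))^2+(Im (x$0))^2+(Re (x$1))^2+(Im (x$1))^2)/3 + c 3*((Re (x$0))^2+(Im (x$0))^2-(Re (x$1))^2-(Im (x$1))^2)/2 + c 1*(Re (x$0)*Re (x$1)+Im (x$0)*Im (x$1)) + c 2*(Re (x$0)*Im (x$1)-Im (x$0)*Re (x$1)) + ((Re (x$2))^2+(Im (x$2))^2)/3"
      by (simp add: bloch_e sum3 field_simps power2_eq_square)
    show ?thesis using k z e by linarith
  qed
  thus ?thesis using h tr unfolding density_mat_def psd_def by blast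
qed
lemma kron_e: "kron A B $ (a,b) $ (c,d) = A $ a $ c * B $ b $ d"
  by (simp add: kron_def)
lemma all33: "(\<forall>p::3\<times>3. P p) \<longleftrightarrow> (\<forall>a b. P (a,b))" by auto

lemma decomp:
  assumes "\<forall>mu\<in>{1,2,3}. \<alpha> mu * \<beta> mu = t mu"
  shows "rho1 t = (\<Sum>i\<in>{1,2,3,4}. (1/4) *\<^sub>R
                     kron (bloch (\<lambda>mu. eps i mu * \<alpha> mu)) (bloch (\<lambda>mu. eps i mu * \<beta> mu)))"
proof -
  have t: "t 1 = \<alpha> 1 * \<beta> 1" "t 2 = \<alpha> 2 * \<beta> 2" "t 3 = \<alpha> 3 * \<beta> 3" using assms by auto
  have t': "complex_of_real (t (Suc 0)) = of_real (\<alpha> (Suc 0)) * of_real (\<beta> (Suc 0))"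
    using t(1) by simp
  show ?thesis
    unfolding vec_eq_iff all33 all3 rho1_def
    by (simp del: vector_scaleR_component add: sc_e kron_e mat_e gm_e bloch_e eps_def t t' field_simps)
qed
definition v3 :: "complex \<Rightarrow> complex \<Rightarrow> complex^3" where
  "v3 u v = (\<chi> i. if i = 0 then u else if i = 1 then v else 0)"
lemma v3_e: "v3 u v $ 0 = u" "v3 u v $ 1 = v" "v3 u v $ 2 = 0"
  by (simp_all add: v3_def)

lemma psd_form:
  assumes "psd (A::complex^3^3)"
  shows "0 \<le> Re (cnj u * A$0$0 * u + cnj u * A$0$1 * v + cnj v * A$1$0 * u + cnj v * A$1$1 * v)"
proof -
  have "0 \<le> Re (\<Sum>i\<in>UNIV. \<Sum>j\<in>UNIV. cnj (v3 u v $ i) * A $ i $ j * v3 u v $ j)"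
    using assms unfolding psd_def by blast
  thus ?thesis by (simp add: sum3 v3_e)
qed

definition ra1 :: "complex^3^3 \<Rightarrow> real" where "ra1 A = 2 * Re (A$0$1)"
definition ra2 :: "complex^3^3 \<Rightarrow> real" where "ra2 A = - 2 * Im (A$0$1)"
definition ra3 :: "complex^3^3 \<Rightarrow> real" where "ra3 A = Re (A$0$0) - Re (A$1$1)"
definition rw :: "complex^3^3 \<Rightarrow> real" where "rw A = Re (A$0$0) + Re (A$1$1)"

lemma psd_bloch_bound:
  assumes "psd (A::complex^3^3)"
  shows "(ra1 A)^2 + (ra2 A)^2 + (ra3 A)^2 \<le> (rw A)^2 \<and> 0 \<le> rw A"
proof -
  have h: "hermitian_mat A" using assms unfolding psd_def by blast
  define P where "P = Re (A$0$0)"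
  define Q where "Q = Re (A$1$1)"
  define a where "a = Re (A$0$1)"
  define b where "b = Im (A$0$1)"
  have A00: "A$0$0 = of_real P"
  proof -
    have "A$0$0 = cnj (A$0$0)" using h unfolding hermitian_mat_def by blast
    then have "Im (A$0$0) = 0" by (simp add: complex_eq_iff)
    then show ?thesis unfolding P_def by (simp add: complex_eq_iff)
  qed
  have A11: "A$1$1 = of_real Q"
  proof -
    have "A$1$1 = cnj (A$1$1)" using h unfolding hermitian_mat_def by blast
    then have "Im (A$1$1) = 0" by (simp add: complex_eq_iff)
    then show ?thesis unfolding Q_def by (simp add: complex_eq_iff)
  qed
  have A01: "A$0$1 = Complex a b" unfolding a_def b_def by simp
  have A10: "A$1$0 = Complex a (-b)"
  proof -
    have "A$1$0 = cnj (A$0$1)" using h unfolding hermitian_mat_def by blast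
    then show ?thesis unfolding a_def b_def by (simp add: complex_eq_iff)
  qed
  have F: "\<And>u v. 0 \<le> Re (cnj u * of_real P * u + cnj u * Complex a b * v + cnj v * Complex a (-b) * u + cnj v * of_real Q * v)"
    using psd_form[OF assms, unfolded A00 A11 A01 A10] by blast
  have P0: "0 \<le> P" using F[of 1 0] by simp
  have Q0: "0 \<le> Q" using F[of 0 1] by simp
  have key: "a^2 + b^2 \<le> P * Q"
  proof (cases "Q > 0")
    case True
    have "0 \<le> Q * (P*Q - (a^2+b^2))"
      using F[of "of_real Q" "- Complex a (-b)"] by (simp add: algebra_simps power2_eq_square)
    then show ?thesis using True by (simp add: zero_le_mult_iff)
  next
    case False
    then have Qz: "Q = 0" using Q0 by simp
    show ?thesis
    proof (rule ccontr)
      assume "\<not> ?thesis"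
      then have pos: "a^2+b^2 > 0" using Qz by simp
      define s where "s = (P+1)/(a^2+b^2)"
      have f1: "0 \<le> P - 2 * (s * (a^2+b^2))"
        using F[of 1 "- of_real s * Complex a (-b)"] Qz by (simp add: algebra_simps power2_eq_square)
      have f2: "s * (a^2+b^2) = P+1"
      proof -
        have nz: "a^2+b^2 \<noteq> 0" using pos by linarith
        show ?thesis unfolding s_def by (simp only: divide_inverse mult.assoc left_inverse[OF nz] mult_1_right)
      qed
      show False using f1 f2 P0 by linarith
    qed
  qed
  have "(ra1 A)^2 + (ra2 A)^2 + (ra3 A)^2 = 4*(a^2+b^2) + (P-Q)^2"
    unfolding ra1_def ra2_def ra3_def a_def b_def P_def Q_def by (simp add: power2_eq_square algebra_simps)
  also have "\<dots> \<le> (P+Q)^2" using key by (simp add: power2_eq_square algebra_simps)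
  finally show ?thesis unfolding rw_def P_def[symmetric] Q_def[symmetric] using P0 Q0 by simp
qed
lemma cs3:
  fixes x1 x2 x3 y1 y2 y3 w v :: real
  assumes "x1^2+x2^2+x3^2 \<le> w^2" "0 \<le> w" "y1^2+y2^2+y3^2 \<le> v^2" "0 \<le> v"
  shows "\<bar>x1*y1\<bar> + \<bar>x2*y2\<bar> + \<bar>x3*y3\<bar> \<le> w * v"
proof -
  define X1 where "X1 = \<bar>x1\<bar>" define X2 where "X2 = \<bar>x2\<bar>" define X3 where "X3 = \<bar>x3\<bar>"
  define Y1 where "Y1 = \<bar>y1\<bar>" define Y2 where "Y2 = \<bar>y2\<bar>" define Y3 where "Y3 = \<bar>y3\<bar>"
  define S where "S = X1*Y1 + X2*Y2 + X3*Y3"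
  have e: "\<bar>x1*y1\<bar> + \<bar>x2*y2\<bar> + \<bar>x3*y3\<bar> = S"
    unfolding S_def X1_def X2_def X3_def Y1_def Y2_def Y3_def by (simp add: abs_mult)
  have S0: "0 \<le> S" unfolding S_def X1_def X2_def X3_def Y1_def Y2_def Y3_def by simp
  have lag: "(X1^2+X2^2+X3^2)*(Y1^2+Y2^2+Y3^2) - S^2 = (X1*Y2-X2*Y1)^2 + (X1*Y3-X3*Y1)^2 + (X2*Y3-X3*Y2)^2"
    unfolding S_def by algebra
  have "0 \<le> (X1*Y2-X2*Y1)^2 + (X1*Y3-X3*Y1)^2 + (X2*Y3-X3*Y2)^2"
    by (intro add_nonneg_nonneg) simp_all
  hence "S^2 \<le> (X1^2+X2^2+X3^2)*(Y1^2+Y2^2+Y3^2)" using lag by linarith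
  also have "\<dots> = (x1^2+x2^2+x3^2)*(y1^2+y2^2+y3^2)"
    unfolding X1_def X2_def X3_def Y1_def Y2_def Y3_def by simp
  also have "\<dots> \<le> w^2 * v^2"
    by (rule mult_mono[OF assms(1) assms(3)]) (simp_all add: sum_power2_ge_zero add_nonneg_nonneg)
  also have "\<dots> = (w * v)^2" by (simp add: power_mult_distrib)
  finally have "S^2 \<le> (w * v)^2" .
  hence "S \<le> w * v" using S0 assms(2,4) by (meson mult_nonneg_nonneg power2_le_imp_le)
  thus ?thesis using e by simp
qed

definition F1 :: "complex^(3\<times>3)^(3\<times>3) \<Rightarrow> complex" where
  "F1 M = M$(0,0)$(1,1) + M$(0,1)$(1,0) + M$(1,0)$(0,1) + M$(1,1)$(0,0)"
definition F2 :: "complex^(3\<times>3)^(3\<times>3) \<Rightarrow> complex" where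
  "F2 M = - (M$(0,0)$(1,1) - M$(0,1)$(1,0) - M$(1,0)$(0,1) + M$(1,1)$(0,0))"
definition F3 :: "complex^(3\<times>3)^(3\<times>3) \<Rightarrow> complex" where
  "F3 M = M$(0,0)$(0,0) - M$(0,1)$(0,1) - M$(1,0)$(1,0) + M$(1,1)$(1,1)"
definition G :: "complex^(3\<times>3)^(3\<times>3) \<Rightarrow> complex" where
  "G M = M$(0,0)$(0,0) + M$(0,1)$(0,1) + M$(1,0)$(1,0) + M$(1,1)$(1,1)"

lemma F_rho1: "F1 (rho1 t) = of_real (t 1)" "F2 (rho1 t) = of_real (t 2)"
  "F3 (rho1 t) = of_real (t 3)" "G (rho1 t) = 4/9"
  unfolding F1_def F2_def F3_def G_def rho1_def
  by (simp_all del: vector_scaleR_component add: sc_e kron_e mat_e gm_e field_simps)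

lemma F_lin:
  fixes c :: "nat \<Rightarrow> real" and M :: "nat \<Rightarrow> complex^(3\<times>3)^(3\<times>3)"
  shows "F1 (\<Sum>k<n. c k *\<^sub>R M k) = (\<Sum>k<n. of_real (c k) * F1 (M k))"
    "F2 (\<Sum>k<n. c k *\<^sub>R M k) = (\<Sum>k<n. of_real (c k) * F2 (M k))"
    "F3 (\<Sum>k<n. c k *\<^sub>R M k) = (\<Sum>k<n. of_real (c k) * F3 (M k))"
    "G (\<Sum>k<n. c k *\<^sub>R M k) = (\<Sum>k<n. of_real (c k) * G (M k))"
  unfolding F1_def F2_def F3_def G_def
  by (simp_all del: vector_scaleR_component add: sc_e sum.distrib sum_subtractf ring_distribs sum_negf)

lemma herm_vals:
  assumes "hermitian_mat (A::complex^3^3)"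
  shows "A$0$1 + A$1$0 = of_real (ra1 A)" "\<i> * (A$0$1 - A$1$0) = of_real (ra2 A)"
    "A$0$0 - A$1$1 = of_real (ra3 A)" "A$0$0 + A$1$1 = of_real (rw A)"
proof -
  have a: "A$1$0 = cnj (A$0$1)" "A$0$0 = cnj (A$0$0)" "A$1$1 = cnj (A$1$1)"
    using assms unfolding hermitian_mat_def by blast+
  have i0: "Im (A$0$0) = 0" "Im (A$1$1) = 0" using a(2,3) by (simp_all add: complex_eq_iff)
  show "A$0$1 + A$1$0 = of_real (ra1 A)" "\<i> * (A$0$1 - A$1$0) = of_real (ra2 A)"
    "A$0$0 - A$1$1 = of_real (ra3 A)" "A$0$0 + A$1$1 = of_real (rw A)"
    unfolding ra1_def ra2_def ra3_def rw_def a(1) using i0 by (simp_all add: complex_eq_iff)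
qed

lemma F_kron:
  assumes "hermitian_mat A" "hermitian_mat B"
  shows "F1 (kron A B) = of_real (ra1 A * ra1 B)" "F2 (kron A B) = of_real (ra2 A * ra2 B)"
    "F3 (kron A B) = of_real (ra3 A * ra3 B)" "G (kron A B) = of_real (rw A * rw B)"
proof -
  note hA = herm_vals[OF assms(1)] and hB = herm_vals[OF assms(2)]
  have "F1 (kron A B) = (A$0$1 + A$1$0) * (B$0$1 + B$1$0)" unfolding F1_def kron_e by algebra
  then show "F1 (kron A B) = of_real (ra1 A * ra1 B)" using hA hB by simp
  have "F2 (kron A B) = (\<i> * (A$0$1 - A$1$0)) * (\<i> * (B$0$1 - B$1$0))" unfolding F2_def kron_e
    by (simp add: algebra_simps)
  then show "F2 (kron A B) = of_real (ra2 A * ra2 B)" using hA hB by simp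
  have "F3 (kron A B) = (A$0$0 - A$1$1) * (B$0$0 - B$1$1)" unfolding F3_def kron_e by algebra
  then show "F3 (kron A B) = of_real (ra3 A * ra3 B)" using hA hB by simp
  have "G (kron A B) = (A$0$0 + A$1$1) * (B$0$0 + B$1$1)" unfolding G_def kron_e by algebra
  then show "G (kron A B) = of_real (rw A * rw B)" using hA hB by simp
qed
lemma necessity:
  assumes "separable (rho1 t)"
  shows "\<bar>t 1\<bar> + \<bar>t 2\<bar> + \<bar>t 3\<bar> \<le> 4/9"
proof -
  obtain n p and A B :: "nat \<Rightarrow> complex^3^3" where
    hk: "\<forall>k<n. 0 \<le> p k \<and> density_mat (A k) \<and> density_mat (B k)" and
    R: "rho1 t = (\<Sum>k<n. p k *\<^sub>R kron (A k) (B k))"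
    using assms unfolding separable_def by blast
  have psdA: "\<And>k. k < n \<Longrightarrow> psd (A k)" and psdB: "\<And>k. k < n \<Longrightarrow> psd (B k)"
    and p0: "\<And>k. k < n \<Longrightarrow> 0 \<le> p k"
    using hk unfolding density_mat_def by auto
  have hA: "\<And>k. k < n \<Longrightarrow> hermitian_mat (A k)" and hB: "\<And>k. k < n \<Longrightarrow> hermitian_mat (B k)"
    using psdA psdB unfolding psd_def by auto
  have of_real_inj: "\<And>x y. complex_of_real x = complex_of_real y \<Longrightarrow> x = y" by simp
  have t1: "t 1 = (\<Sum>k<n. p k * (ra1 (A k) * ra1 (B k)))"
  proof (rule of_real_inj)
    have "complex_of_real (t 1) = F1 (rho1 t)" by (simp add: F_rho1)
    also have "\<dots> = (\<Sum>k<n. of_real (p k) * F1 (kron (A k) (B k)))" unfolding R F_lin ..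
    also have "\<dots> = (\<Sum>k<n. of_real (p k) * of_real (ra1 (A k) * ra1 (B k)))"
      by (rule sum.cong) (simp_all add: F_kron hA hB)
    finally show "complex_of_real (t 1) = complex_of_real (\<Sum>k<n. p k * (ra1 (A k) * ra1 (B k)))" by simp
  qed
  have t2: "t 2 = (\<Sum>k<n. p k * (ra2 (A k) * ra2 (B k)))"
  proof (rule of_real_inj)
    have "complex_of_real (t 2) = F2 (rho1 t)" by (simp add: F_rho1)
    also have "\<dots> = (\<Sum>k<n. of_real (p k) * F2 (kron (A k) (B k)))" unfolding R F_lin ..
    also have "\<dots> = (\<Sum>k<n. of_real (p k) * of_real (ra2 (A k) * ra2 (B k)))"
      by (rule sum.cong) (simp_all add: F_kron hA hB)
    finally show "complex_of_real (t 2) = complex_of_real (\<Sum>k<n. p k * (ra2 (A k) * ra2 (B k)))" by simp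
  qed
  have t3: "t 3 = (\<Sum>k<n. p k * (ra3 (A k) * ra3 (B k)))"
  proof (rule of_real_inj)
    have "complex_of_real (t 3) = F3 (rho1 t)" by (simp add: F_rho1)
    also have "\<dots> = (\<Sum>k<n. of_real (p k) * F3 (kron (A k) (B k)))" unfolding R F_lin ..
    also have "\<dots> = (\<Sum>k<n. of_real (p k) * of_real (ra3 (A k) * ra3 (B k)))"
      by (rule sum.cong) (simp_all add: F_kron hA hB)
    finally show "complex_of_real (t 3) = complex_of_real (\<Sum>k<n. p k * (ra3 (A k) * ra3 (B k)))" by simp
  qed
  have g: "4/9 = (\<Sum>k<n. p k * (rw (A k) * rw (B k)))"
  proof (rule of_real_inj)
    have "complex_of_real (4/9) = G (rho1 t)" by (simp add: F_rho1)
    also have "\<dots> = (\<Sum>k<n. of_real (p k) * G (kron (A k) (B k)))" unfolding R F_lin ..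
    also have "\<dots> = (\<Sum>k<n. of_real (p k) * of_real (rw (A k) * rw (B k)))"
      by (rule sum.cong) (simp_all add: F_kron hA hB)
    finally show "complex_of_real (4/9) = complex_of_real (\<Sum>k<n. p k * (rw (A k) * rw (B k)))" by simp
  qed
  have "\<bar>t 1\<bar> + \<bar>t 2\<bar> + \<bar>t 3\<bar> \<le>
      (\<Sum>k<n. \<bar>p k * (ra1 (A k) * ra1 (B k))\<bar>) + (\<Sum>k<n. \<bar>p k * (ra2 (A k) * ra2 (B k))\<bar>)
       + (\<Sum>k<n. \<bar>p k * (ra3 (A k) * ra3 (B k))\<bar>)"
    unfolding t1 t2 t3 by (intro add_mono sum_abs)
  also have "\<dots> = (\<Sum>k<n. p k * (\<bar>ra1 (A k) * ra1 (B k)\<bar> + \<bar>ra2 (A k) * ra2 (B k)\<bar> + \<bar>ra3 (A k) * ra3 (B k)\<bar>))"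
    unfolding sum.distrib[symmetric]
    by (rule sum.cong) (simp_all add: abs_mult p0 distrib_left)
  also have "\<dots> \<le> (\<Sum>k<n. p k * (rw (A k) * rw (B k)))"
  proof (rule sum_mono)
    fix k assume "k \<in> {..<n}"
    then have k: "k < n" by simp
    have a: "(ra1 (A k))^2 + (ra2 (A k))^2 + (ra3 (A k))^2 \<le> (rw (A k))^2 \<and> 0 \<le> rw (A k)"
      by (rule psd_bloch_bound[OF psdA[OF k]])
    have b: "(ra1 (B k))^2 + (ra2 (B k))^2 + (ra3 (B k))^2 \<le> (rw (B k))^2 \<and> 0 \<le> rw (B k)"
      by (rule psd_bloch_bound[OF psdB[OF k]])
    show "p k * (\<bar>ra1 (A k) * ra1 (B k)\<bar> + \<bar>ra2 (A k) * ra2 (B k)\<bar> + \<bar>ra3 (A k) * ra3 (B k)\<bar>)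
        \<le> p k * (rw (A k) * rw (B k))"
      using cs3[of "ra1 (A k)" "ra2 (A k)" "ra3 (A k)" "rw (A k)" "ra1 (B k)" "ra2 (B k)" "ra3 (B k)" "rw (B k)"] a b p0[OF k]
      by (simp add: mult_left_mono)
  qed
  also have "\<dots> = 4/9" using g by simp
  finally show ?thesis .
qed
lemma sum4: "(\<Sum>k<4. f (Suc k)) = (\<Sum>i\<in>{1,2,3,4::nat}. (f i :: 'a::comm_monoid_add))"
  by (simp add: numeral_eq_Suc lessThan_Suc add_ac)

lemma eps_sq: "(eps i mu)^2 = 1" by (simp add: eps_def)

lemma dens_eps:
  assumes "(\<Sum>mu\<in>{1,2,3}. (\<alpha> mu)\<^sup>2) \<le> 4/9"
  shows "density_mat (bloch (\<lambda>mu. eps i mu * \<alpha> mu))"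
proof (rule bloch_density)
  have "(\<Sum>mu\<in>{1,2,3}. (eps i mu * \<alpha> mu)\<^sup>2) = (\<Sum>mu\<in>{1,2,3}. (\<alpha> mu)\<^sup>2)"
    by (rule sum.cong) (simp_all add: power_mult_distrib eps_sq)
  then show "(\<Sum>mu\<in>{1,2,3}. (eps i mu * \<alpha> mu)\<^sup>2) \<le> 4/9" using assms by simp
qed

theorem mainTheorem5:
  fixes t :: "nat \<Rightarrow> real"
  assumes "psd (rho1 t)"
  shows "(separable (rho1 t) \<longleftrightarrow> \<bar>t 1\<bar> + \<bar>t 2\<bar> + \<bar>t 3\<bar> \<le> 4/9) \<and>
    (\<bar>t 1\<bar> + \<bar>t 2\<bar> + \<bar>t 3\<bar> \<le> 4/9 \<longrightarrow>
      (\<forall>\<alpha> \<beta> :: nat \<Rightarrow> real.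
         (\<forall>mu\<in>{1,2,3}. \<alpha> mu * \<beta> mu = t mu) \<and>
         (\<Sum>mu\<in>{1,2,3}. (\<alpha> mu)\<^sup>2) \<le> 4/9 \<and> (\<Sum>mu\<in>{1,2,3}. (\<beta> mu)\<^sup>2) \<le> 4/9 \<longrightarrow>
         rho1 t = (\<Sum>i\<in>{1,2,3,4}. (1/4) *\<^sub>R
                     kron (bloch (\<lambda>mu. eps i mu * \<alpha> mu)) (bloch (\<lambda>mu. eps i mu * \<beta> mu))) \<and>
         (\<forall>i\<in>{1,2,3,4}. density_mat (bloch (\<lambda>mu. eps i mu * \<alpha> mu)) \<and>
                           density_mat (bloch (\<lambda>mu. eps i mu * \<beta> mu)))))"
proof -
  have part2: "\<forall>\<alpha> \<beta> :: nat \<Rightarrow> real.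
         (\<forall>mu\<in>{1,2,3}. \<alpha> mu * \<beta> mu = t mu) \<and>
         (\<Sum>mu\<in>{1,2,3}. (\<alpha> mu)\<^sup>2) \<le> 4/9 \<and> (\<Sum>mu\<in>{1,2,3}. (\<beta> mu)\<^sup>2) \<le> 4/9 \<longrightarrow>
         rho1 t = (\<Sum>i\<in>{1,2,3,4}. (1/4) *\<^sub>R
                     kron (bloch (\<lambda>mu. eps i mu * \<alpha> mu)) (bloch (\<lambda>mu. eps i mu * \<beta> mu))) \<and>
         (\<forall>i\<in>{1,2,3,4}. density_mat (bloch (\<lambda>mu. eps i mu * \<alpha> mu)) \<and>
                           density_mat (bloch (\<lambda>mu. eps i mu * \<beta> mu)))"
    using decomp dens_eps by blast
  have suff: "separable (rho1 t)" if le: "\<bar>t 1\<bar> + \<bar>t 2\<bar> + \<bar>t 3\<bar> \<le> 4/9"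
  proof -
    define \<alpha> where "\<alpha> mu = sgn (t mu) * sqrt \<bar>t mu\<bar>" for mu
    define \<beta> where "\<beta> mu = sqrt \<bar>t mu\<bar>" for mu
    have ab: "\<forall>mu\<in>{1,2,3}. \<alpha> mu * \<beta> mu = t mu"
      unfolding \<alpha>_def \<beta>_def by (auto simp: mult.assoc sgn_mult_abs)
    have a2: "(\<alpha> mu)\<^sup>2 = \<bar>t mu\<bar>" for mu
      unfolding \<alpha>_def by (cases "t mu = 0") (simp_all add: power_mult_distrib sgn_if)
    have b2: "(\<beta> mu)\<^sup>2 = \<bar>t mu\<bar>" for mu
      unfolding \<beta>_def by simp
    have sa: "(\<Sum>mu\<in>{1,2,3}. (\<alpha> mu)\<^sup>2) \<le> 4/9" using le by (simp add: a2)
    have sb: "(\<Sum>mu\<in>{1,2,3}. (\<beta> mu)\<^sup>2) \<le> 4/9" using le by (simp add: b2)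
    from part2 ab sa sb have D:
      "rho1 t = (\<Sum>i\<in>{1,2,3,4}. (1/4) *\<^sub>R
                     kron (bloch (\<lambda>mu. eps i mu * \<alpha> mu)) (bloch (\<lambda>mu. eps i mu * \<beta> mu)))"
      and dens: "\<forall>i\<in>{1,2,3,4}. density_mat (bloch (\<lambda>mu. eps i mu * \<alpha> mu)) \<and>
                           density_mat (bloch (\<lambda>mu. eps i mu * \<beta> mu))"
      by blast+
    define A where "A k = bloch (\<lambda>mu. eps (Suc k) mu * \<alpha> mu)" for k
    define B where "B k = bloch (\<lambda>mu. eps (Suc k) mu * \<beta> mu)" for k
    define p where "p (k::nat) = (1/4::real)" for k
    have "\<forall>k<4. 0 \<le> p k \<and> density_mat (A k) \<and> density_mat (B k)"
      unfolding A_def B_def p_def using dens_eps[OF sa] dens_eps[OF sb] by simp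
    moreover have "(\<Sum>k<4. p k) = 1" unfolding p_def by simp
    moreover have "rho1 t = (\<Sum>k<4. p k *\<^sub>R kron (A k) (B k))"
      unfolding D A_def B_def p_def
      by (rule sum4[where f = "\<lambda>i. (1/4) *\<^sub>R kron (bloch (\<lambda>mu. eps i mu * \<alpha> mu)) (bloch (\<lambda>mu. eps i mu * \<beta> mu))", symmetric])
    ultimately show ?thesis unfolding separable_def by blast
  qed
  show ?thesis using part2 suff necessity by blast
qed
end
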